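(* Let $A\in\mathbb{R}^{n\times n}$, $B\in\mathbb{R}^{n\times m}$, $C\in\mathbb{R}^{p\times n}$ with $(A,C)$ observable and $(A,B)$ reachable, let $\ell$ be the observability index of $(A,C)$, and let $\mathbf{A}_\ell,\mathbf{B}_\ell,H_\ell$ be as in the context. Then $\operatorname{im}H_\ell=R(\mathbf{A}_\ell,\mathbf{B}_\ell)$.
   Context: The observability index $\ell$ of an observable pair $(A,C)$ is the smallest $l$ with $\operatorname{rank}[C;CA;\dots;CA^{l-1}]=n$. Define $\mathcal{O}_\ell=[C;CA;\dots;CA^{\ell-1}]\in\mathbb{R}^{p\ell\times n}$; $\mathcal{T}_\ell\in\mathbb{R}^{p\ell\times m\ell}$ block lower triangular with $(i,j)$ block ($i,j=1,\dots,\ell$) equal to $CA^{i-j-1}B$ if $i>j$ and $0$ otherwise; $\mathcal{R}_\ell=[A^{\ell-1}B\ \cdots\ AB\ B]$; $\mathcal{O}_\ell^{L}$ a fixed left inverse ($\mathcal{O}_\ell^L\mathcal{O}_\ell=I_n$). $\mathbf{F}_\ell=\mathrm{blockdiag}(S_p,S_m)$ where $S_q\in\mathbb{R}^{q\ell\times q\ell}$ has blocks $I_q$ in block positions $(i,i+1)$, $i=1,\dots,\ell-1$, zeros elsewhere; $\mathbf{L}_\ell\in\mathbb{R}^{(p\ell+m\ell)\times p}$ has $I_p$ in rows $p\ell-p+1,\dots,p\ell$, zeros elsewhere; $\mathbf{B}_\ell\in\mathbb{R}^{(p\ell+m\ell)\times m}$ has $I_m$ in its last $m$ rows, zeros elsewhere.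 $Z_\ell=[CA^\ell\mathcal{O}_\ell^L\ \ C\mathcal{R}_\ell-CA^\ell\mathcal{O}_\ell^L\mathcal{T}_\ell]$, $\mathbf{A}_\ell=\mathbf{F}_\ell+\mathbf{L}_\ell Z_\ell$. $H_\ell=\begin{bmatrix}\mathcal{O}_\ell&\mathcal{T}_\ell\\0&I_{m\ell}\end{bmatrix}$. For a pair $(M,N)$ with $M$ of size $q\times q$, $R(M,N)=\operatorname{im}[M^{q-1}N\ \cdots\ MN\ N]$ is its reachability subspace. *)

theory Defs
  imports Jordan_Normal_Form.DL_Rank
begin

text \<open>Matrices are Jordan_Normal_Form matrices over the reals; block indices are 0-based.\<close>

definition mat_rank :: "real mat \<Rightarrow> nat" where
  "mat_rank M = vec_space.rank (dim_row M) M"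

definition im_mat :: "real mat \<Rightarrow> real vec set" where
  "im_mat M = vec_space.col_space (dim_row M) M"

text \<open>O_l = [C; CA; ...; CA^(l-1)], size (p*l) x n.\<close>
definition obs_mat :: "real mat \<Rightarrow> real mat \<Rightarrow> nat \<Rightarrow> real mat" where
  "obs_mat A C l = mat (dim_row C * l) (dim_col A)
     (\<lambda>(i,j). (C * (A ^\<^sub>m (i div dim_row C))) $$ (i mod dim_row C, j))"

text \<open>R_l = [A^(l-1)B ... AB B], size n x (m*l).\<close>
definition ctrb_mat :: "real mat \<Rightarrow> real mat \<Rightarrow> nat \<Rightarrow> real mat" where
  "ctrb_mat A B l = mat (dim_row A) (dim_col B * l)
     (\<lambda>(i,j). ((A ^\<^sub>m (l - 1 - j div dim_col B)) * B) $$ (i, j mod dim_col B))"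

text \<open>T_l: block lower triangular, block (i,j) = C A^(i-j-1) B if i > j, else 0.\<close>
definition toep_mat :: "real mat \<Rightarrow> real mat \<Rightarrow> real mat \<Rightarrow> nat \<Rightarrow> real mat" where
  "toep_mat A B C l = mat (dim_row C * l) (dim_col B * l)
     (\<lambda>(i,j). if i div dim_row C > j div dim_col B
              then (C * (A ^\<^sub>m (i div dim_row C - j div dim_col B - 1)) * B)
                     $$ (i mod dim_row C, j mod dim_col B)
              else 0)"

definition observable :: "real mat \<Rightarrow> real mat \<Rightarrow> bool" where
  "observable A C \<longleftrightarrow> mat_rank (obs_mat A C (dim_row A)) = dim_row A"

definition reachable :: "real mat \<Rightarrow> real mat \<Rightarrow> bool" where
  "reachable A B \<longleftrightarrow> mat_rank (ctrb_mat A B (dim_row A)) = dim_row A"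

definition obs_index :: "real mat \<Rightarrow> real mat \<Rightarrow> nat" where
  "obs_index A C = (LEAST l. mat_rank (obs_mat A C l) = dim_row A)"

definition reach_subspace :: "real mat \<Rightarrow> real mat \<Rightarrow> real vec set" where
  "reach_subspace M N = im_mat (ctrb_mat M N (dim_row M))"

text \<open>S_q: (q*l) x (q*l), identity blocks at block positions (i,i+1).\<close>
definition shift_mat :: "nat \<Rightarrow> nat \<Rightarrow> real mat" where
  "shift_mat q l = mat (q*l) (q*l) (\<lambda>(r,c). if c = r + q then 1 else 0)"

definition hcat :: "real mat \<Rightarrow> real mat \<Rightarrow> real mat" where
  "hcat X Y = four_block_mat X Y (0\<^sub>m 0 (dim_col X)) (0\<^sub>m 0 (dim_col Y))"

definition bF :: "nat \<Rightarrow> nat \<Rightarrow> nat \<Rightarrow> real mat" where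
  "bF p m l = four_block_mat (shift_mat p l) (0\<^sub>m (p*l) (m*l)) (0\<^sub>m (m*l) (p*l)) (shift_mat m l)"

text \<open>L_l: I_p in rows p*l-p+1..p*l (1-based).\<close>
definition bL :: "nat \<Rightarrow> nat \<Rightarrow> nat \<Rightarrow> real mat" where
  "bL p m l = mat (p*l + m*l) p (\<lambda>(r,c). if r + p = p*l + c then 1 else 0)"

text \<open>B_l: I_m in the last m rows.\<close>
definition bB :: "nat \<Rightarrow> nat \<Rightarrow> nat \<Rightarrow> real mat" where
  "bB p m l = mat (p*l + m*l) m (\<lambda>(r,c). if r + m = p*l + m*l + c then 1 else 0)"

definition bZ :: "real mat \<Rightarrow> real mat \<Rightarrow> real mat \<Rightarrow> real mat \<Rightarrow> nat \<Rightarrow> real mat" where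
  "bZ A B C OL l = hcat (C * (A ^\<^sub>m l) * OL)
       (C * ctrb_mat A B l - C * (A ^\<^sub>m l) * OL * toep_mat A B C l)"

definition bA :: "real mat \<Rightarrow> real mat \<Rightarrow> real mat \<Rightarrow> real mat \<Rightarrow> nat \<Rightarrow> real mat" where
  "bA A B C OL l = bF (dim_row C) (dim_col B) l + bL (dim_row C) (dim_col B) l * bZ A B C OL l"

definition bH :: "real mat \<Rightarrow> real mat \<Rightarrow> real mat \<Rightarrow> nat \<Rightarrow> real mat" where
  "bH A B C l = four_block_mat (obs_mat A C l) (toep_mat A B C l)
      (0\<^sub>m (dim_col B * l) (dim_col A)) (1\<^sub>m (dim_col B * l))"

end

theory Submission
  imports Defs
begin
lemma (in vec_space) max_indpt_exists:
  assumes "A \<in> carrier_mat n nc"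
  shows "\<exists>S. maximal S (\<lambda>T. T \<subseteq> set (cols A) \<and> lin_indpt T)"
    using maximal_exists[of "(\<lambda>T. T \<subseteq> set (cols A) \<and> lin_indpt T)" "card (set (cols A))" "{}"]
    by (meson List.finite_set card_mono empty_iff empty_subsetI finite_lin_indpt2 rev_finite_subset)

lemma (in vec_space) rank_le_nr:
  assumes "A \<in> carrier_mat n nc"
  shows "rank A \<le> n"
proof -
  obtain S where S: "maximal S (\<lambda>T. T \<subseteq> set (cols A) \<and> lin_indpt T)"
    using max_indpt_exists[OF assms] by blast
  have r: "rank A = card S" using rank_card_indpt[OF assms S] .
  have sub: "S \<subseteq> carrier_vec n" using S assms unfolding maximal_def
    using cols_dim by (metis carrier_matD(1) subset_trans)
  have "lin_indpt S" using S unfolding maximal_def by blast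
  then have "card S \<le> dim" using li_le_dim(2)[OF fin_dim] sub by simp
  then show ?thesis using r dim_is_n by simp
qed

lemma (in vec_space) full_rank_col_space:
  assumes "A \<in> carrier_mat n nc" and "rank A = n"
  shows "col_space A = carrier_vec n"
proof -
  obtain S where S: "maximal S (\<lambda>T. T \<subseteq> set (cols A) \<and> lin_indpt T)"
    using max_indpt_exists[OF assms(1)] by blast
  have r: "rank A = card S" using rank_card_indpt[OF assms(1) S] .
  have cs: "set (cols A) \<subseteq> carrier_vec n" using assms(1) cols_dim by (metis carrier_matD(1))
  have sub: "S \<subseteq> carrier_vec n" using S cs unfolding maximal_def by blast
  have li: "lin_indpt S" using S unfolding maximal_def by blast
  have fin: "finite S" using S unfolding maximal_def by (meson List.finite_set rev_finite_subset)
  have "basis S" using dim_li_is_basis[OF fin_dim fin _ li] sub r assms(2) dim_is_n by simp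
  then have "span S = carrier_vec n" unfolding basis_def by simp
  moreover have "span S \<subseteq> span (set (cols A))" using S unfolding maximal_def
    by (simp add: cs span_is_monotone)
  moreover have "span (set (cols A)) \<subseteq> carrier_vec n" using cs by (simp add: span_is_subset2)
  ultimately show ?thesis unfolding col_space_def by blast
qed

fun run :: "real mat \<Rightarrow> real mat \<Rightarrow> real vec \<Rightarrow> (nat \<Rightarrow> real vec) \<Rightarrow> nat \<Rightarrow> real vec" where
  "run M N xi vs 0 = xi"
| "run M N xi vs (Suc k) = M *\<^sub>v run M N xi vs k + N *\<^sub>v vs k"

lemma mat_mult_zero_vec[simp]:
  "M \<in> carrier_mat r k \<Longrightarrow> M *\<^sub>v 0\<^sub>v k = 0\<^sub>v r"
  by (intro eq_vecI) auto

lemma pow_commute: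
  assumes "M \<in> carrier_mat k k"
  shows "M * M ^\<^sub>m a = M ^\<^sub>m a * M"
proof (induction a)
  case 0 then show ?case using assms by simp
next
  case (Suc a)
  have "M * M ^\<^sub>m Suc a = (M * M ^\<^sub>m a) * M" using assms by (simp add: assoc_mult_mat[of _ k k _ k _ k])
  also have "\<dots> = M ^\<^sub>m Suc a * M" using Suc by simp
  finally show ?case .
qed

lemma pow_mult_vec_Suc:
  assumes "M \<in> carrier_mat k k" "x \<in> carrier_vec k"
  shows "M ^\<^sub>m Suc a *\<^sub>v x = M *\<^sub>v (M ^\<^sub>m a *\<^sub>v x)"
proof -
  have "M ^\<^sub>m Suc a = M * M ^\<^sub>m a" using pow_commute[OF assms(1)] by simp
  then show ?thesis using assms by (metis assoc_mult_mat_vec pow_carrier_mat)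
qed

lemma run_carrier:
  assumes "M \<in> carrier_mat k k" "N \<in> carrier_mat k m" "xi \<in> carrier_vec k"
    "\<And>j. vs j \<in> carrier_vec m"
  shows "run M N xi vs a \<in> carrier_vec k"
  using assms by (induction a) auto

lemma run_cong:
  assumes "\<And>j. j < a \<Longrightarrow> vs j = ws j"
  shows "run M N xi vs a = run M N xi ws a"
  using assms by (induction a) auto

lemma run_shift:
  "run M N xi vs (Suc a) = run M N (M *\<^sub>v xi + N *\<^sub>v vs 0) (\<lambda>j. vs (Suc j)) a"
  by (induction a) auto

lemma run_GS:
  assumes M: "M \<in> carrier_mat k k" and N: "N \<in> carrier_mat k m" and xi: "xi \<in> carrier_vec k"
    and vs: "\<And>j. vs j \<in> carrier_vec m"
  shows "L \<in> carrier_mat r k \<Longrightarrow> i < r \<Longrightarrow> (L *\<^sub>v run M N xi vs a) $ i =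
     (L *\<^sub>v (M ^\<^sub>m a *\<^sub>v xi)) $ i + (\<Sum>j<a. (L *\<^sub>v (M ^\<^sub>m (a - 1 - j) *\<^sub>v (N *\<^sub>v vs j))) $ i)"
proof (induction a arbitrary: L)
  case 0
  then show ?case using xi M by simp
next
  case (Suc a)
  have g: "run M N xi vs a \<in> carrier_vec k" using run_carrier[OF M N xi vs] .
  have LM: "L * M \<in> carrier_mat r k" using Suc.prems M by simp
  have "L *\<^sub>v run M N xi vs (Suc a) = L *\<^sub>v (M *\<^sub>v run M N xi vs a) + L *\<^sub>v (N *\<^sub>v vs a)"
    using Suc.prems M N g vs by (simp add: mult_add_distrib_mat_vec[of L r k])
  also have "L *\<^sub>v (M *\<^sub>v run M N xi vs a) = (L * M) *\<^sub>v run M N xi vs a"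
    using Suc.prems M g by simp
  finally have e: "(L *\<^sub>v run M N xi vs (Suc a)) $ i = ((L * M) *\<^sub>v run M N xi vs a) $ i + (L *\<^sub>v (N *\<^sub>v vs a)) $ i"
    using Suc.prems by simp
  have ih: "((L * M) *\<^sub>v run M N xi vs a) $ i = ((L * M) *\<^sub>v (M ^\<^sub>m a *\<^sub>v xi)) $ i +
     (\<Sum>j<a. ((L * M) *\<^sub>v (M ^\<^sub>m (a - 1 - j) *\<^sub>v (N *\<^sub>v vs j))) $ i)"
    using Suc.IH[OF LM Suc.prems(2)] .
  have t1: "(L * M) *\<^sub>v (M ^\<^sub>m a *\<^sub>v xi) = L *\<^sub>v (M ^\<^sub>m Suc a *\<^sub>v xi)"
  proof -
    have c: "M ^\<^sub>m a *\<^sub>v xi \<in> carrier_vec k" using M xi by (metis mult_mat_vec_carrier pow_carrier_mat)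
    show ?thesis using assoc_mult_mat_vec[OF Suc.prems(1) M c] pow_mult_vec_Suc[OF M xi, of a] by simp
  qed
  have t2: "(L * M) *\<^sub>v (M ^\<^sub>m (a - 1 - j) *\<^sub>v (N *\<^sub>v vs j)) = L *\<^sub>v (M ^\<^sub>m (Suc a - 1 - j) *\<^sub>v (N *\<^sub>v vs j))"
    if "j < a" for j
  proof -
    have "Suc a - 1 - j = Suc (a - 1 - j)" using that by simp
    moreover have "N *\<^sub>v vs j \<in> carrier_vec k" using N vs[of j] by simp
    moreover have c: "M ^\<^sub>m (a - 1 - j) *\<^sub>v (N *\<^sub>v vs j) \<in> carrier_vec k"
      using M N vs[of j] by (metis mult_mat_vec_carrier pow_carrier_mat)
    ultimately show ?thesis using pow_mult_vec_Suc[OF M, of "N *\<^sub>v vs j" "a - 1 - j"]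
      assoc_mult_mat_vec[OF Suc.prems(1) M c] by simp
  qed
  have "(\<Sum>j<Suc a. (L *\<^sub>v (M ^\<^sub>m (Suc a - 1 - j) *\<^sub>v (N *\<^sub>v vs j))) $ i) =
     (\<Sum>j<a. (L *\<^sub>v (M ^\<^sub>m (Suc a - 1 - j) *\<^sub>v (N *\<^sub>v vs j))) $ i) + (L *\<^sub>v (N *\<^sub>v vs a)) $ i"
    using M N vs[of a] by simp
  then show ?case using e ih t1 t2 by simp
qed

lemma sum_lessThan_add:
  fixes f :: "nat \<Rightarrow> real"
  shows "(\<Sum>c<a+m. f c) = (\<Sum>c<a. f c) + (\<Sum>c<m. f (a+c))"
  by (induction m) auto

lemma sum_split_blocks:
  fixes f :: "nat \<Rightarrow> real"
  shows "(\<Sum>c<m*k. f c) = (\<Sum>j<k. \<Sum>c<m. f (j*m + c))"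
proof (induction k)
  case 0 then show ?case by simp
next
  case (Suc k)
  have "(\<Sum>c<m*Suc k. f c) = (\<Sum>c<m*k + m. f c)" by (simp add: algebra_simps)
  also have "\<dots> = (\<Sum>c<m*k. f c) + (\<Sum>c<m. f (m*k + c))"
    by (rule sum_lessThan_add)
  finally show ?case using Suc by (simp add: algebra_simps)
qed

definition blk :: "nat \<Rightarrow> real vec \<Rightarrow> nat \<Rightarrow> real vec" where
  "blk m u j = vec m (\<lambda>c. u $ (j*m + c))"

definition cat :: "nat \<Rightarrow> (nat \<Rightarrow> real vec) \<Rightarrow> nat \<Rightarrow> real vec" where
  "cat m vs k = vec (m*k) (\<lambda>i. vs (i div m) $ (i mod m))"

lemma blk_carrier[simp]: "blk m u j \<in> carrier_vec m" unfolding blk_def by simp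

lemma cat_blk: assumes "u \<in> carrier_vec (m*k)" shows "cat m (blk m u) k = u"
proof (rule eq_vecI)
  show "dim_vec (cat m (blk m u) k) = dim_vec u" using assms unfolding cat_def by simp
  fix i assume "i < dim_vec u"
  then have i: "i < m*k" using assms by simp
  then have "m > 0" by (cases m) auto
  then show "cat m (blk m u) k $ i = u $ i" using i unfolding cat_def blk_def by simp
qed

lemma ctrb_run:
  assumes M: "M \<in> carrier_mat k k" and N: "N \<in> carrier_mat k m"
    and vs: "\<And>j. vs j \<in> carrier_vec m"
  shows "ctrb_mat M N a *\<^sub>v cat m vs a = run M N (0\<^sub>v k) vs a"
proof (rule eq_vecI)
  have rc: "run M N (0\<^sub>v k) vs a \<in> carrier_vec k" using run_carrier[OF M N _ vs] by simp
  show "dim_vec (ctrb_mat M N a *\<^sub>v cat m vs a) = dim_vec (run M N (0\<^sub>v k) vs a)"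
    using M rc unfolding ctrb_mat_def by simp
  fix i assume "i < dim_vec (run M N (0\<^sub>v k) vs a)"
  then have i: "i < k" using rc by simp
  have "(ctrb_mat M N a *\<^sub>v cat m vs a) $ i =
      (\<Sum>c<m*a. ((M ^\<^sub>m (a - 1 - c div m)) * N) $$ (i, c mod m) * vs (c div m) $ (c mod m))"
    using i M N unfolding ctrb_mat_def cat_def by (simp add: scalar_prod_def row_def lessThan_atLeast0 mult.commute)
  also have "\<dots> = (\<Sum>j<a. \<Sum>c<m. ((M ^\<^sub>m (a - 1 - j)) * N) $$ (i, c) * vs j $ c)"
    unfolding sum_split_blocks by (intro sum.cong refl) auto
  also have "\<dots> = (\<Sum>j<a. (1\<^sub>m k *\<^sub>v (M ^\<^sub>m (a - 1 - j) *\<^sub>v (N *\<^sub>v vs j))) $ i)"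
  proof (intro sum.cong refl)
    fix j
    have "(1\<^sub>m k *\<^sub>v (M ^\<^sub>m (a - 1 - j) *\<^sub>v (N *\<^sub>v vs j))) = (M ^\<^sub>m (a - 1 - j) * N) *\<^sub>v vs j"
      using M N vs[of j] by (metis assoc_mult_mat_vec mult_mat_vec_carrier one_mult_mat_vec pow_carrier_mat)
    then show "(\<Sum>c<m. ((M ^\<^sub>m (a - 1 - j)) * N) $$ (i, c) * vs j $ c) = (1\<^sub>m k *\<^sub>v (M ^\<^sub>m (a - 1 - j) *\<^sub>v (N *\<^sub>v vs j))) $ i"
      using i M N vs[of j] by (simp add: scalar_prod_def row_def lessThan_atLeast0)
  qed
  also have "\<dots> = (1\<^sub>m k *\<^sub>v run M N (0\<^sub>v k) vs a) $ i"
  proof -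
    have gs: "(1\<^sub>m k *\<^sub>v run M N (0\<^sub>v k) vs a) $ i = (1\<^sub>m k *\<^sub>v (M ^\<^sub>m a *\<^sub>v 0\<^sub>v k)) $ i
       + (\<Sum>j<a. (1\<^sub>m k *\<^sub>v (M ^\<^sub>m (a - 1 - j) *\<^sub>v (N *\<^sub>v vs j))) $ i)"
      by (rule run_GS[OF M N _ vs]) (use i in auto)
    have z: "M ^\<^sub>m a *\<^sub>v 0\<^sub>v k = 0\<^sub>v k" by (rule mat_mult_zero_vec) (use M in simp)
    show ?thesis using gs z i by simp
  qed
  also have "\<dots> = run M N (0\<^sub>v k) vs a $ i" using rc by simp
  finally show "(ctrb_mat M N a *\<^sub>v cat m vs a) $ i = run M N (0\<^sub>v k) vs a $ i" .
qed

context
  fixes A B C :: "real mat" and n m p :: nat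
  assumes A: "A \<in> carrier_mat n n" and B: "B \<in> carrier_mat n m" and C: "C \<in> carrier_mat p n"
begin

lemma dimsC[simp]: "dim_row C = p" "dim_col C = n" using C by auto
lemma dimsB[simp]: "dim_row B = n" "dim_col B = m" using B by auto
lemma dimsA[simp]: "dim_row A = n" "dim_col A = n" using A by auto

lemma mat_vec_entry:
  assumes "X \<in> carrier_mat r k" "w \<in> carrier_vec k" "i < r"
  shows "(X *\<^sub>v w) $ i = (\<Sum>c<k. X $$ (i, c) * w $ c)"
  using assms by (simp add: scalar_prod_def row_def lessThan_atLeast0)

lemma obs_dim: "obs_mat A C l \<in> carrier_mat (p*l) n"
  using A C unfolding obs_mat_def by auto

lemma toep_dim: "toep_mat A B C l \<in> carrier_mat (p*l) (m*l)"
  using B C unfolding toep_mat_def by auto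

lemma obs_act:
  assumes i: "i < p*l" and x: "x \<in> carrier_vec n"
  shows "(obs_mat A C l *\<^sub>v x) $ i = (C *\<^sub>v (A ^\<^sub>m (i div p) *\<^sub>v x)) $ (i mod p)"
proof -
  have p: "p > 0" using i by (cases p) auto
  have im: "i mod p < p" using p by simp
  have "(obs_mat A C l *\<^sub>v x) $ i = (\<Sum>c<n. (C * A ^\<^sub>m (i div p)) $$ (i mod p, c) * x $ c)"
    using i A C x unfolding obs_mat_def by (simp add: scalar_prod_def row_def lessThan_atLeast0)
  also have "\<dots> = ((C * A ^\<^sub>m (i div p)) *\<^sub>v x) $ (i mod p)"
    using im A C x by (simp add: scalar_prod_def row_def lessThan_atLeast0)
  also have "\<dots> = (C *\<^sub>v (A ^\<^sub>m (i div p) *\<^sub>v x)) $ (i mod p)"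
    using assoc_mult_mat_vec[OF C pow_carrier_mat[OF A] x] by simp
  finally show ?thesis .
qed

lemma toep_act:
  assumes i: "i < p*l" and u: "u \<in> carrier_vec (m*l)"
  shows "(toep_mat A B C l *\<^sub>v u) $ i = (C *\<^sub>v run A B (0\<^sub>v n) (blk m u) (i div p)) $ (i mod p)"
proof -
  have p: "p > 0" using i by (cases p) auto
  have im: "i mod p < p" using p by simp
  have kl: "i div p < l" using i p by (simp add: less_mult_imp_div_less mult.commute)
  let ?k = "i div p"
  have "(toep_mat A B C l *\<^sub>v u) $ i = (\<Sum>c<m*l. (if c div m < ?k then
        (C * A ^\<^sub>m (?k - c div m - 1) * B) $$ (i mod p, c mod m) else 0) * u $ c)"
  proof -
    have T: "toep_mat A B C l $$ (i, c) = (if c div m < ?k then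
        (C * A ^\<^sub>m (?k - c div m - 1) * B) $$ (i mod p, c mod m) else 0)" if "c < m*l" for c
      using i that unfolding toep_mat_def by simp
    have "(toep_mat A B C l *\<^sub>v u) $ i = (\<Sum>c<m*l. toep_mat A B C l $$ (i, c) * u $ c)"
      using i u toep_dim[of l] by (simp add: scalar_prod_def row_def lessThan_atLeast0 carrier_matD)
    also have "\<dots> = (\<Sum>c<m*l. (if c div m < ?k then
        (C * A ^\<^sub>m (?k - c div m - 1) * B) $$ (i mod p, c mod m) else 0) * u $ c)"
    proof (rule sum.cong[OF refl])
      fix c assume "c \<in> {..<m*l}"
      then have "c < m*l" by simp
      show "toep_mat A B C l $$ (i, c) * u $ c = (if c div m < ?k then
        (C * A ^\<^sub>m (?k - c div m - 1) * B) $$ (i mod p, c mod m) else 0) * u $ c"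
        by (subst T[OF \<open>c < m*l\<close>]) (rule refl)
    qed
    finally show ?thesis .
  qed
  also have "\<dots> = (\<Sum>j<l. \<Sum>c<m. (if j < ?k then
        (C * A ^\<^sub>m (?k - j - 1) * B) $$ (i mod p, c) else 0) * blk m u j $ c)"
    unfolding sum_split_blocks by (intro sum.cong refl) (auto simp: blk_def)
  also have "\<dots> = (\<Sum>j<l. if j < ?k then ((C * A ^\<^sub>m (?k - j - 1) * B) *\<^sub>v blk m u j) $ (i mod p) else 0)"
  proof (intro sum.cong refl)
    fix j
    have X: "C * A ^\<^sub>m (?k - j - 1) * B \<in> carrier_mat p m"
      using mult_carrier_mat[OF mult_carrier_mat[OF C pow_carrier_mat[OF A]] B] .
    show "(\<Sum>c<m. (if j < ?k then (C * A ^\<^sub>m (?k - j - 1) * B) $$ (i mod p, c) else 0) * blk m u j $ c) =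
      (if j < ?k then ((C * A ^\<^sub>m (?k - j - 1) * B) *\<^sub>v blk m u j) $ (i mod p) else 0)"
      using mat_vec_entry[OF X blk_carrier im] by simp
  qed
  also have "\<dots> = (\<Sum>j<?k. ((C * A ^\<^sub>m (?k - j - 1) * B) *\<^sub>v blk m u j) $ (i mod p))"
  proof -
    have "{j\<in>{..<l}. j < ?k} = {..<?k}" using kl by auto
    then show ?thesis by (simp add: sum.inter_filter[symmetric])
  qed
  also have "\<dots> = (\<Sum>j<?k. (C *\<^sub>v (A ^\<^sub>m (?k - 1 - j) *\<^sub>v (B *\<^sub>v blk m u j))) $ (i mod p))"
  proof (intro sum.cong refl)
    fix j
    have "(C * A ^\<^sub>m (?k - j - 1) * B) *\<^sub>v blk m u j = C *\<^sub>v (A ^\<^sub>m (?k - j - 1) *\<^sub>v (B *\<^sub>v blk m u j))"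
    proof -
      have P: "A ^\<^sub>m (?k - j - 1) \<in> carrier_mat n n" using A by simp
      have "(C * A ^\<^sub>m (?k - j - 1) * B) *\<^sub>v blk m u j = (C * A ^\<^sub>m (?k - j - 1)) *\<^sub>v (B *\<^sub>v blk m u j)"
        using assoc_mult_mat_vec[OF mult_carrier_mat[OF C P] B blk_carrier] .
      also have "\<dots> = C *\<^sub>v (A ^\<^sub>m (?k - j - 1) *\<^sub>v (B *\<^sub>v blk m u j))"
        using assoc_mult_mat_vec[OF C P mult_mat_vec_carrier[OF B blk_carrier]] .
      finally show ?thesis .
    qed
    then show "((C * A ^\<^sub>m (?k - j - 1) * B) *\<^sub>v blk m u j) $ (i mod p) =
      (C *\<^sub>v (A ^\<^sub>m (?k - 1 - j) *\<^sub>v (B *\<^sub>v blk m u j))) $ (i mod p)" by (simp add: diff_commute)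
  qed
  also have "\<dots> = (C *\<^sub>v run A B (0\<^sub>v n) (blk m u) ?k) $ (i mod p)"
  proof -
    have gs: "(C *\<^sub>v run A B (0\<^sub>v n) (blk m u) ?k) $ (i mod p) = (C *\<^sub>v (A ^\<^sub>m ?k *\<^sub>v 0\<^sub>v n)) $ (i mod p)
       + (\<Sum>j<?k. (C *\<^sub>v (A ^\<^sub>m (?k - 1 - j) *\<^sub>v (B *\<^sub>v blk m u j))) $ (i mod p))"
      by (rule run_GS[OF A B _ blk_carrier C im]) simp
    have z: "A ^\<^sub>m ?k *\<^sub>v 0\<^sub>v n = 0\<^sub>v n" by (rule mat_mult_zero_vec) (use A in simp)
    show ?thesis using gs z im C by simp
  qed
  finally show ?thesis .
qed

lemma obs_toep_act:
  assumes i: "i < p*l" and x: "x \<in> carrier_vec n" and u: "u \<in> carrier_vec (m*l)"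
  shows "(obs_mat A C l *\<^sub>v x + toep_mat A B C l *\<^sub>v u) $ i = (C *\<^sub>v run A B x (blk m u) (i div p)) $ (i mod p)"
proof -
  have p: "p > 0" using i by (cases p) auto
  have im: "i mod p < p" using p by simp
  let ?k = "i div p"
  have g1: "(C *\<^sub>v run A B x (blk m u) ?k) $ (i mod p) = (C *\<^sub>v (A ^\<^sub>m ?k *\<^sub>v x)) $ (i mod p)
       + (\<Sum>j<?k. (C *\<^sub>v (A ^\<^sub>m (?k - 1 - j) *\<^sub>v (B *\<^sub>v blk m u j))) $ (i mod p))"
    by (rule run_GS[OF A B x blk_carrier C im])
  have g0: "(C *\<^sub>v run A B (0\<^sub>v n) (blk m u) ?k) $ (i mod p) = (C *\<^sub>v (A ^\<^sub>m ?k *\<^sub>v 0\<^sub>v n)) $ (i mod p)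
       + (\<Sum>j<?k. (C *\<^sub>v (A ^\<^sub>m (?k - 1 - j) *\<^sub>v (B *\<^sub>v blk m u j))) $ (i mod p))"
    by (rule run_GS[OF A B _ blk_carrier C im]) simp
  have z: "A ^\<^sub>m ?k *\<^sub>v 0\<^sub>v n = 0\<^sub>v n" by (rule mat_mult_zero_vec) (use A in simp)
  have "(obs_mat A C l *\<^sub>v x + toep_mat A B C l *\<^sub>v u) $ i = (obs_mat A C l *\<^sub>v x) $ i + (toep_mat A B C l *\<^sub>v u) $ i"
    using i obs_dim[of l] toep_dim[of l] by (simp add: carrier_matD)
  then show ?thesis using obs_act[OF i x] toep_act[OF i u] g1 g0 z im C by simp
qed

end

lemma zero_mat_mult_vec: "v \<in> carrier_vec k \<Longrightarrow> 0\<^sub>m r k *\<^sub>v v = 0\<^sub>v r"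
  by (intro eq_vecI) auto

lemma hcat_act:
  assumes X: "X \<in> carrier_mat r k1" and Y: "Y \<in> carrier_mat r k2"
    and a: "a \<in> carrier_vec k1" and d: "d \<in> carrier_vec k2"
  shows "hcat X Y *\<^sub>v (a @\<^sub>v d) = X *\<^sub>v a + Y *\<^sub>v d"
proof -
  have "hcat X Y *\<^sub>v (a @\<^sub>v d) = (X *\<^sub>v a + Y *\<^sub>v d) @\<^sub>v (0\<^sub>m 0 k1 *\<^sub>v a + 0\<^sub>m 0 k2 *\<^sub>v d)"
  proof -
    have "dim_col X = k1" "dim_col Y = k2" using X Y by auto
    then show ?thesis unfolding hcat_def
      using four_block_mat_mult_vec[OF X Y zero_carrier_mat zero_carrier_mat a d] by simp
  qed
  also have "\<dots> = X *\<^sub>v a + Y *\<^sub>v d"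
    by (intro eq_vecI) (use X Y in auto)
  finally show ?thesis .
qed

lemma shift_act:
  assumes y: "y \<in> carrier_vec (q*l)" and i: "i < q*l"
  shows "(shift_mat q l *\<^sub>v y) $ i = (if i + q < q*l then y $ (i+q) else 0)"
proof -
  have "(shift_mat q l *\<^sub>v y) $ i = (\<Sum>c<q*l. (if c = i + q then 1 else 0) * y $ c)"
    using y i unfolding shift_mat_def by (simp add: scalar_prod_def row_def lessThan_atLeast0)
  also have "\<dots> = (\<Sum>c<q*l. if c = i + q then y $ c else 0)"
    by (intro sum.cong refl) auto
  also have "\<dots> = (if i + q < q*l then y $ (i+q) else 0)"
    by (simp add: sum.delta')
  finally show ?thesis .
qed

lemma bL_act:
  assumes z: "z \<in> carrier_vec p" and i: "i < p*l + m*l"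
  shows "(bL p m l *\<^sub>v z) $ i = (if p*l \<le> i + p \<and> i < p*l then z $ (i + p - p*l) else 0)"
proof -
  have "(bL p m l *\<^sub>v z) $ i = (\<Sum>c<p. (if i + p = p*l + c then 1 else 0) * z $ c)"
    using z i unfolding bL_def by (simp add: scalar_prod_def row_def lessThan_atLeast0)
  also have "\<dots> = (\<Sum>c<p. if c = i + p - p*l \<and> p*l \<le> i + p then z $ c else 0)"
    by (intro sum.cong refl) auto
  also have "\<dots> = (if p*l \<le> i + p \<and> i < p*l then z $ (i + p - p*l) else 0)"
  proof (cases "p*l \<le> i + p")
    case True
    then show ?thesis by (simp add: sum.delta') arith
  next
    case False
    then show ?thesis by simp
  qed
  finally show ?thesis .
qed

lemma bB_act:
  assumes v: "v \<in> carrier_vec m" and i: "i < p*l + m*l"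
  shows "(bB p m l *\<^sub>v v) $ i = (if p*l + m*l \<le> i + m then v $ (i + m - (p*l + m*l)) else 0)"
proof -
  have "(bB p m l *\<^sub>v v) $ i = (\<Sum>c<m. (if i + m = p*l + m*l + c then 1 else 0) * v $ c)"
    using v i unfolding bB_def by (simp add: scalar_prod_def row_def lessThan_atLeast0)
  also have "\<dots> = (\<Sum>c<m. if c = i + m - (p*l + m*l) \<and> p*l + m*l \<le> i + m then v $ c else 0)"
    by (intro sum.cong refl) auto
  also have "\<dots> = (if p*l + m*l \<le> i + m then v $ (i + m - (p*l + m*l)) else 0)"
  proof (cases "p*l + m*l \<le> i + m")
    case True
    then show ?thesis using i by (simp add: sum.delta')
  next
    case False
    then show ?thesis by simp
  qed
  finally show ?thesis .
qed

definition shin :: "nat \<Rightarrow> nat \<Rightarrow> real vec \<Rightarrow> real vec \<Rightarrow> real vec" where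
  "shin m l u v = vec (m*l) (\<lambda>i. if i + m < m*l then u $ (i+m) else v $ (i+m-m*l))"

lemma shin_carrier[simp]: "shin m l u v \<in> carrier_vec (m*l)" unfolding shin_def by simp
lemma shin_dim[simp]: "dim_vec (shin m l u v) = m*l" unfolding shin_def by simp

lemma blk_shin:
  assumes "j + 1 < l"
  shows "blk m (shin m l u v) j = blk m u (Suc j)"
proof (rule eq_vecI)
  fix c assume "c < dim_vec (blk m u (Suc j))"
  then have c: "c < m" by (simp add: blk_def)
  have "(j+2)*m \<le> l*m" using assms by (intro mult_le_mono1) simp
  then have "j*m + c + m < m*l" using c by (simp add: algebra_simps)
  then show "blk m (shin m l u v) j $ c = blk m u (Suc j) $ c"
    using c by (simp add: blk_def shin_def algebra_simps)
qed (simp add: blk_def)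

context
  fixes A B C OL :: "real mat" and n m p l :: nat
  assumes A: "A \<in> carrier_mat n n" and B: "B \<in> carrier_mat n m" and C: "C \<in> carrier_mat p n"
    and OL: "OL \<in> carrier_mat n (p*l)" and OLO: "OL * obs_mat A C l = 1\<^sub>m n"
begin

lemma dC[simp]: "dim_row C = p" "dim_col C = n" using C by auto
lemma dB[simp]: "dim_row B = n" "dim_col B = m" using B by auto
lemma dA[simp]: "dim_row A = n" "dim_col A = n" using A by auto

lemma O_dim: "obs_mat A C l \<in> carrier_mat (p*l) n" using obs_dim[OF A B C] .
lemma T_dim: "toep_mat A B C l \<in> carrier_mat (p*l) (m*l)" using toep_dim[OF A B C] .
lemma R_dim: "ctrb_mat A B l \<in> carrier_mat n (m*l)" unfolding ctrb_mat_def by simp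

lemma H_act:
  assumes x: "x \<in> carrier_vec n" and u: "u \<in> carrier_vec (m*l)"
  shows "bH A B C l *\<^sub>v (x @\<^sub>v u) = (obs_mat A C l *\<^sub>v x + toep_mat A B C l *\<^sub>v u) @\<^sub>v u"
proof -
  have "bH A B C l *\<^sub>v (x @\<^sub>v u) = (obs_mat A C l *\<^sub>v x + toep_mat A B C l *\<^sub>v u) @\<^sub>v
      (0\<^sub>m (m*l) n *\<^sub>v x + 1\<^sub>m (m*l) *\<^sub>v u)"
    unfolding bH_def using four_block_mat_mult_vec[OF O_dim T_dim zero_carrier_mat one_carrier_mat x u]
    by simp
  also have "0\<^sub>m (m*l) n *\<^sub>v x + 1\<^sub>m (m*l) *\<^sub>v u = u" using x u by (simp add: zero_mat_mult_vec)
  finally show ?thesis .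
qed

lemma Z_act:
  assumes x: "x \<in> carrier_vec n" and u: "u \<in> carrier_vec (m*l)"
  shows "bZ A B C OL l *\<^sub>v ((obs_mat A C l *\<^sub>v x + toep_mat A B C l *\<^sub>v u) @\<^sub>v u) = C *\<^sub>v run A B x (blk m u) l"
proof -
  let ?O = "obs_mat A C l" and ?T = "toep_mat A B C l" and ?R = "ctrb_mat A B l"
  let ?P = "C * A ^\<^sub>m l"
  have P: "?P \<in> carrier_mat p n" using C A by simp
  have PO: "?P * OL \<in> carrier_mat p (p*l)" using P OL by simp
  have Ox: "?O *\<^sub>v x \<in> carrier_vec (p*l)" using O_dim x by simp
  have Tu: "?T *\<^sub>v u \<in> carrier_vec (p*l)" using T_dim u by simp
  have w: "OL *\<^sub>v (?T *\<^sub>v u) \<in> carrier_vec n" using OL Tu by simp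
  have CR: "C * ?R \<in> carrier_mat p (m*l)" using C R_dim by simp
  have POT: "?P * OL * ?T \<in> carrier_mat p (m*l)" using PO T_dim by simp
  have "bZ A B C OL l *\<^sub>v ((?O *\<^sub>v x + ?T *\<^sub>v u) @\<^sub>v u) =
      (?P * OL) *\<^sub>v (?O *\<^sub>v x + ?T *\<^sub>v u) + (C * ?R - ?P * OL * ?T) *\<^sub>v u"
  proof -
    have Y: "C * ?R - ?P * OL * ?T \<in> carrier_mat p (m*l)" using minus_carrier_mat[OF POT] .
    have a: "?O *\<^sub>v x + ?T *\<^sub>v u \<in> carrier_vec (p*l)" using Ox Tu by simp
    show ?thesis unfolding bZ_def by (rule hcat_act[OF PO Y a u])
  qed
  also have "(?P * OL) *\<^sub>v (?O *\<^sub>v x + ?T *\<^sub>v u) = ?P *\<^sub>v (OL *\<^sub>v (?O *\<^sub>v x + ?T *\<^sub>v u))"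
    using assoc_mult_mat_vec[OF P OL] Ox Tu by simp
  also have "OL *\<^sub>v (?O *\<^sub>v x + ?T *\<^sub>v u) = OL *\<^sub>v (?O *\<^sub>v x) + OL *\<^sub>v (?T *\<^sub>v u)"
    using mult_add_distrib_mat_vec[OF OL Ox Tu] .
  also have "OL *\<^sub>v (?O *\<^sub>v x) = x"
  proof -
    have "OL *\<^sub>v (?O *\<^sub>v x) = (OL * ?O) *\<^sub>v x" using assoc_mult_mat_vec[OF OL O_dim x] by (rule sym)
    also have "\<dots> = x" unfolding OLO using x by simp
    finally show ?thesis .
  qed
  also have "?P *\<^sub>v (x + OL *\<^sub>v (?T *\<^sub>v u)) = ?P *\<^sub>v x + ?P *\<^sub>v (OL *\<^sub>v (?T *\<^sub>v u))"
    using mult_add_distrib_mat_vec[OF P x w] .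
  also have "(C * ?R - ?P * OL * ?T) *\<^sub>v u = (C * ?R) *\<^sub>v u - (?P * OL * ?T) *\<^sub>v u"
    using minus_mult_distrib_mat_vec[OF CR POT u] .
  also have "(C * ?R) *\<^sub>v u = C *\<^sub>v (?R *\<^sub>v u)" using assoc_mult_mat_vec[OF C R_dim u] .
  also have "?R *\<^sub>v u = run A B (0\<^sub>v n) (blk m u) l"
    using ctrb_run[where vs="blk m u", OF A B blk_carrier, of l] cat_blk[OF u] by simp
  also have "(?P * OL * ?T) *\<^sub>v u = ?P *\<^sub>v (OL *\<^sub>v (?T *\<^sub>v u))"
    using assoc_mult_mat_vec[OF PO T_dim u] assoc_mult_mat_vec[OF P OL Tu] by simp
  finally have e: "bZ A B C OL l *\<^sub>v ((?O *\<^sub>v x + ?T *\<^sub>v u) @\<^sub>v u) =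
     ?P *\<^sub>v x + ?P *\<^sub>v (OL *\<^sub>v (?T *\<^sub>v u)) + (C *\<^sub>v run A B (0\<^sub>v n) (blk m u) l - ?P *\<^sub>v (OL *\<^sub>v (?T *\<^sub>v u)))" .
  have r0: "run A B (0\<^sub>v n) (blk m u) l \<in> carrier_vec n" by (rule run_carrier[OF A B _ blk_carrier]) simp
  have rx: "run A B x (blk m u) l \<in> carrier_vec n" by (rule run_carrier[OF A B x blk_carrier])
  show ?thesis unfolding e
  proof (rule eq_vecI)
    show "dim_vec (?P *\<^sub>v x + ?P *\<^sub>v (OL *\<^sub>v (?T *\<^sub>v u)) + (C *\<^sub>v run A B (0\<^sub>v n) (blk m u) l - ?P *\<^sub>v (OL *\<^sub>v (?T *\<^sub>v u))))
       = dim_vec (C *\<^sub>v run A B x (blk m u) l)" using P by simp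
    fix i assume "i < dim_vec (C *\<^sub>v run A B x (blk m u) l)"
    then have i: "i < p" by simp
    have g1: "(C *\<^sub>v run A B x (blk m u) l) $ i = (C *\<^sub>v (A ^\<^sub>m l *\<^sub>v x)) $ i
       + (\<Sum>j<l. (C *\<^sub>v (A ^\<^sub>m (l - 1 - j) *\<^sub>v (B *\<^sub>v blk m u j))) $ i)"
      by (rule run_GS[OF A B x blk_carrier C i])
    have g0: "(C *\<^sub>v run A B (0\<^sub>v n) (blk m u) l) $ i = (C *\<^sub>v (A ^\<^sub>m l *\<^sub>v 0\<^sub>v n)) $ i
       + (\<Sum>j<l. (C *\<^sub>v (A ^\<^sub>m (l - 1 - j) *\<^sub>v (B *\<^sub>v blk m u j))) $ i)"
      by (rule run_GS[OF A B _ blk_carrier C i]) simp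
    have z: "A ^\<^sub>m l *\<^sub>v 0\<^sub>v n = 0\<^sub>v n" by (rule mat_mult_zero_vec) (use A in simp)
    have px: "?P *\<^sub>v x = C *\<^sub>v (A ^\<^sub>m l *\<^sub>v x)" using assoc_mult_mat_vec[OF C _ x, of "A ^\<^sub>m l"] A by simp
    show "(?P *\<^sub>v x + ?P *\<^sub>v (OL *\<^sub>v (?T *\<^sub>v u)) + (C *\<^sub>v run A B (0\<^sub>v n) (blk m u) l - ?P *\<^sub>v (OL *\<^sub>v (?T *\<^sub>v u)))) $ i
       = (C *\<^sub>v run A B x (blk m u) l) $ i"
    proof -
      have rc: "row C i \<in> carrier_vec n" using row_carrier[of C i] by simp
      show ?thesis using i g1 g0 z px P w r0 rc by simp
    qed
  qed
qed

end

lemma div_last: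
  fixes i p l :: nat
  assumes i: "i < p*l" and ni: "\<not> i + p < p*l"
  shows "i div p = l - 1" "i mod p = i + p - p*l"
proof -
  have p: "p > 0" using i by (cases p) auto
  have l: "l > 0" using i by (cases l) auto
  define r where "r = i + p - p*l"
  have pl: "p \<le> p*l" using l by simp
  have r: "r < p" using i ni unfolding r_def by linarith
  have e: "(l - 1) * p + p = p * l" using l by (cases l) (auto simp: algebra_simps)
  have ir: "i = r + (l - 1) * p" using ni e unfolding r_def by linarith
  show "i div p = l - 1" using p r by (subst ir) simp
  show "i mod p = i + p - p*l" using p r unfolding r_def[symmetric] by (subst ir) simp
qed


lemma shift_carrier: "shift_mat q l \<in> carrier_mat (q*l) (q*l)" by (simp add: shift_mat_def)
lemma bL_carrier: "bL p m l \<in> carrier_mat (p*l+m*l) p" by (simp add: bL_def)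
lemma bB_carrier: "bB p m l \<in> carrier_mat (p*l+m*l) m" by (simp add: bB_def)
lemma bF_carrier: "bF p m l \<in> carrier_mat (p*l+m*l) (p*l+m*l)"
  unfolding bF_def by (rule four_block_carrier_mat[OF shift_carrier shift_carrier])
lemma hcat_carrier: "X \<in> carrier_mat r k1 \<Longrightarrow> Y \<in> carrier_mat r k2 \<Longrightarrow> hcat X Y \<in> carrier_mat r (k1+k2)"
  unfolding hcat_def using four_block_carrier_mat[of X r k1 "0\<^sub>m 0 (dim_col Y)" 0 k2] by auto

context
  fixes A B C OL :: "real mat" and n m p l :: nat
  assumes A: "A \<in> carrier_mat n n" and B: "B \<in> carrier_mat n m" and C: "C \<in> carrier_mat p n"
    and OL: "OL \<in> carrier_mat n (p*l)" and OLO: "OL * obs_mat A C l = 1\<^sub>m n"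
begin

lemma eC[simp]: "dim_row C = p" "dim_col C = n" using C by auto
lemma eB[simp]: "dim_row B = n" "dim_col B = m" using B by auto
lemma eA[simp]: "dim_row A = n" "dim_col A = n" using A by auto

lemmas Hact = H_act[OF A B C OL OLO]
lemmas Zact = Z_act[OF A B C OL OLO]
lemmas Odim = O_dim[OF A B C OL OLO]
lemmas Tdim = T_dim[OF A B C OL OLO]
lemmas Rdim = R_dim[OF A B C OL OLO]

lemma bZ_carrier: "bZ A B C OL l \<in> carrier_mat p (p*l+m*l)"
proof -
  have P: "C * A ^\<^sub>m l * OL \<in> carrier_mat p (p*l)"
    using mult_carrier_mat[OF mult_carrier_mat[OF C pow_carrier_mat[OF A]] OL] .
  have Q: "C * ctrb_mat A B l - C * A ^\<^sub>m l * OL * toep_mat A B C l \<in> carrier_mat p (m*l)"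
    using minus_carrier_mat[OF mult_carrier_mat[OF P Tdim]] .
  show ?thesis unfolding bZ_def by (rule hcat_carrier[OF P Q])
qed

lemma bA_carrier: "bA A B C OL l \<in> carrier_mat (p*l+m*l) (p*l+m*l)"
proof -
  have "bL p m l * bZ A B C OL l \<in> carrier_mat (p*l+m*l) (p*l+m*l)"
    using mult_carrier_mat[OF bL_carrier bZ_carrier] .
  then show ?thesis unfolding bA_def using bF_carrier by simp
qed

lemma bH_carrier: "bH A B C l \<in> carrier_mat (p*l+m*l) (n+m*l)"
  unfolding bH_def using four_block_carrier_mat[OF Odim one_carrier_mat] by simp

lemma inv_step:
  assumes l: "0 < l" and x: "x \<in> carrier_vec n" and u: "u \<in> carrier_vec (m*l)" and v: "v \<in> carrier_vec m"
  shows "bA A B C OL l *\<^sub>v (bH A B C l *\<^sub>v (x @\<^sub>v u)) + bB p m l *\<^sub>v v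
       = bH A B C l *\<^sub>v ((A *\<^sub>v x + B *\<^sub>v blk m u 0) @\<^sub>v shin m l u v)"
proof -
  let ?O = "obs_mat A C l" and ?T = "toep_mat A B C l"
  let ?Y = "?O *\<^sub>v x + ?T *\<^sub>v u"
  let ?z = "C *\<^sub>v run A B x (blk m u) l"
  let ?x' = "A *\<^sub>v x + B *\<^sub>v blk m u 0" and ?u' = "shin m l u v"
  have Y: "?Y \<in> carrier_vec (p*l)" using Odim Tdim x u by simp
  have xi: "?Y @\<^sub>v u \<in> carrier_vec (p*l+m*l)" using Y u by simp
  have x': "?x' \<in> carrier_vec n" using A B x by simp
  have u': "?u' \<in> carrier_vec (m*l)" by simp
  have z: "?z \<in> carrier_vec p" using C run_carrier[OF A B x blk_carrier] by simp
  have LZ: "bL p m l * bZ A B C OL l \<in> carrier_mat (p*l+m*l) (p*l+m*l)"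
    using mult_carrier_mat[OF bL_carrier bZ_carrier] .
  have "bA A B C OL l *\<^sub>v (?Y @\<^sub>v u) = bF p m l *\<^sub>v (?Y @\<^sub>v u) + (bL p m l * bZ A B C OL l) *\<^sub>v (?Y @\<^sub>v u)"
    unfolding bA_def eC eB using add_mult_distrib_mat_vec[OF bF_carrier LZ xi] .
  also have "(bL p m l * bZ A B C OL l) *\<^sub>v (?Y @\<^sub>v u) = bL p m l *\<^sub>v ?z"
    using assoc_mult_mat_vec[OF bL_carrier bZ_carrier xi] Zact[OF x u] by simp
  also have "bF p m l *\<^sub>v (?Y @\<^sub>v u) = shift_mat p l *\<^sub>v ?Y @\<^sub>v shift_mat m l *\<^sub>v u"
    unfolding bF_def by (rule mult_mat_vec_split[OF shift_carrier shift_carrier Y u])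
  finally have L: "bA A B C OL l *\<^sub>v (?Y @\<^sub>v u) = (shift_mat p l *\<^sub>v ?Y @\<^sub>v shift_mat m l *\<^sub>v u) + bL p m l *\<^sub>v ?z" .
  have R: "bH A B C l *\<^sub>v (?x' @\<^sub>v ?u') = (?O *\<^sub>v ?x' + ?T *\<^sub>v ?u') @\<^sub>v ?u'"
    using Hact[OF x' u'] .
  have runeq: "run A B ?x' (blk m ?u') k = run A B x (blk m u) (Suc k)" if "k < l" for k
  proof -
    have "run A B x (blk m u) (Suc k) = run A B ?x' (\<lambda>j. blk m u (Suc j)) k" by (rule run_shift)
    also have "\<dots> = run A B ?x' (blk m ?u') k"
      by (rule run_cong) (use that in \<open>simp add: blk_shin\<close>)
    finally show ?thesis by simp
  qed
  show ?thesis unfolding Hact[OF x u] L R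
  proof (rule eq_vecI)
    show "dim_vec ((shift_mat p l *\<^sub>v ?Y @\<^sub>v shift_mat m l *\<^sub>v u) + bL p m l *\<^sub>v ?z + bB p m l *\<^sub>v v)
      = dim_vec ((?O *\<^sub>v ?x' + ?T *\<^sub>v ?u') @\<^sub>v ?u')"
      using bB_carrier[of p m l] Odim Tdim by simp
    fix i assume "i < dim_vec ((?O *\<^sub>v ?x' + ?T *\<^sub>v ?u') @\<^sub>v ?u')"
    then have i: "i < p*l + m*l" using Odim Tdim by simp
    have d1: "dim_vec (shift_mat p l *\<^sub>v ?Y) = p*l" by (simp add: shift_mat_def)
    have d2: "dim_vec (shift_mat m l *\<^sub>v u) = m*l" by (simp add: shift_mat_def)
    have d3: "dim_vec (?O *\<^sub>v ?x' + ?T *\<^sub>v ?u') = p*l" using Odim Tdim by simp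
    have LHS: "((shift_mat p l *\<^sub>v ?Y @\<^sub>v shift_mat m l *\<^sub>v u) + bL p m l *\<^sub>v ?z + bB p m l *\<^sub>v v) $ i
       = (if i < p*l then (shift_mat p l *\<^sub>v ?Y) $ i else (shift_mat m l *\<^sub>v u) $ (i - p*l))
         + (bL p m l *\<^sub>v ?z) $ i + (bB p m l *\<^sub>v v) $ i"
      using i d1 d2 bL_carrier[of p m l] bB_carrier[of p m l] by simp
    have RHS: "((?O *\<^sub>v ?x' + ?T *\<^sub>v ?u') @\<^sub>v ?u') $ i
       = (if i < p*l then (C *\<^sub>v run A B x (blk m u) (Suc (i div p))) $ (i mod p) else ?u' $ (i - p*l))"
    proof (cases "i < p*l")
      case True
      have p: "p > 0" using True by (cases p) auto
      have "i div p < l" using True p by (simp add: less_mult_imp_div_less mult.commute)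
      then show ?thesis using True d3 obs_toep_act[OF A B C True x' u'] runeq[of "i div p"] by simp
    next
      case False
      then show ?thesis using i d3 by simp
    qed
    have key: "(if i < p*l then (shift_mat p l *\<^sub>v ?Y) $ i else (shift_mat m l *\<^sub>v u) $ (i - p*l))
         + (bL p m l *\<^sub>v ?z) $ i + (bB p m l *\<^sub>v v) $ i
       = (if i < p*l then (C *\<^sub>v run A B x (blk m u) (Suc (i div p))) $ (i mod p) else ?u' $ (i - p*l))"
    proof (cases "i < p*l")
      case True
      have p: "p > 0" using True by (cases p) auto
      have bB0: "(bB p m l *\<^sub>v v) $ i = 0"
      proof -
        have "m \<le> m*l" using l by simp
        then have "\<not> (p*l + m*l \<le> i + m)" using True by linarith
        then show ?thesis using bB_act[OF v i] by simp
      qed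
      show ?thesis
      proof (cases "i + p < p*l")
        case True2: True
        have "(shift_mat p l *\<^sub>v ?Y) $ i = ?Y $ (i+p)" using shift_act[OF Y \<open>i < p*l\<close>] True2 by simp
        also have "\<dots> = (C *\<^sub>v run A B x (blk m u) ((i+p) div p)) $ ((i+p) mod p)"
          by (rule obs_toep_act[OF A B C True2 x u])
        also have "(i+p) div p = Suc (i div p)" using p by simp
        also have "(i+p) mod p = i mod p" by simp
        finally have s: "(shift_mat p l *\<^sub>v ?Y) $ i = (C *\<^sub>v run A B x (blk m u) (Suc (i div p))) $ (i mod p)" .
        have "(bL p m l *\<^sub>v ?z) $ i = 0" using bL_act[OF z i] True2 by simp
        then show ?thesis using s bB0 True by simp
      next
        case False2: False
        have dl: "i div p = l - 1" "i mod p = i + p - p*l" using div_last[OF True False2] by auto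
        have s: "(shift_mat p l *\<^sub>v ?Y) $ i = 0" using shift_act[OF Y True] False2 by simp
        have "(bL p m l *\<^sub>v ?z) $ i = ?z $ (i + p - p*l)" using bL_act[OF z i] False2 True by simp
        moreover have "Suc (i div p) = l" using dl l by simp
        ultimately show ?thesis using s bB0 True dl by simp
      qed
    next
      case False
      let ?j = "i - p*l"
      have j: "?j < m*l" using i False by simp
      have bL0: "(bL p m l *\<^sub>v ?z) $ i = 0" using bL_act[OF z i] False by simp
      have s: "(shift_mat m l *\<^sub>v u) $ ?j = (if ?j + m < m*l then u $ (?j+m) else 0)"
        by (rule shift_act[OF u j])
      have bBv: "(bB p m l *\<^sub>v v) $ i = (if ?j + m < m*l then 0 else v $ (?j + m - m*l))"
        using bB_act[OF v i] False by auto
      have sh: "?u' $ ?j = (if ?j + m < m*l then u $ (?j+m) else v $ (?j + m - m*l))"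
        using j unfolding shin_def by simp
      show ?thesis using False s bBv sh bL0 by simp
    qed
    show "((shift_mat p l *\<^sub>v ?Y @\<^sub>v shift_mat m l *\<^sub>v u) + bL p m l *\<^sub>v ?z + bB p m l *\<^sub>v v) $ i
       = ((?O *\<^sub>v ?x' + ?T *\<^sub>v ?u') @\<^sub>v ?u') $ i"
      by (rule trans[OF LHS trans[OF key RHS[symmetric]]])
  qed
qed

end

lemma run_zero:
  assumes M: "M \<in> carrier_mat k k" and N: "N \<in> carrier_mat k m" and z: "\<And>j. j < d \<Longrightarrow> vs j = 0\<^sub>v m"
  shows "run M N (0\<^sub>v k) vs d = 0\<^sub>v k"
  using z
proof (induction d)
  case 0 then show ?case by simp
next
  case (Suc d)
  then have "run M N (0\<^sub>v k) vs d = 0\<^sub>v k" "vs d = 0\<^sub>v m" by auto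
  then show ?case using M N by simp
qed

lemma run_prefix:
  assumes z: "\<And>j. j < d \<Longrightarrow> vs j = 0\<^sub>v m" and M: "M \<in> carrier_mat k k" and N: "N \<in> carrier_mat k m"
  shows "run M N (0\<^sub>v k) vs (d + t) = run M N (0\<^sub>v k) (\<lambda>j. vs (d + j)) t"
proof (induction t)
  case 0 then show ?case using run_zero[OF M N z] by simp
next
  case (Suc t)
  then show ?case by simp
qed

lemma zero_append: "0\<^sub>v a @\<^sub>v 0\<^sub>v b = (0\<^sub>v (a+b) :: real vec)"
  by (intro eq_vecI) auto

definition win :: "nat \<Rightarrow> nat \<Rightarrow> (nat \<Rightarrow> real vec) \<Rightarrow> nat \<Rightarrow> real vec" where
  "win m l vs k = vec (m*l) (\<lambda>i. if l \<le> k + i div m then vs (k + i div m - l) $ (i mod m) else 0)"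

lemma win_carrier[simp]: "win m l vs k \<in> carrier_vec (m*l)" unfolding win_def by simp
lemma win_dim[simp]: "dim_vec (win m l vs k) = m*l" unfolding win_def by simp

lemma win0: "win m l vs 0 = 0\<^sub>v (m*l)"
proof (intro eq_vecI)
  fix i assume "i < dim_vec (0\<^sub>v (m*l))"
  then have i: "i < m*l" by simp
  then have "i div m < l" by (simp add: less_mult_imp_div_less mult.commute)
  then show "win m l vs 0 $ i = 0\<^sub>v (m*l) $ i" using i unfolding win_def by simp
qed (simp add: win_def)

lemma blk_win0:
  assumes l: "0 < l" and vs: "\<And>j. vs j \<in> carrier_vec m"
  shows "blk m (win m l vs k) 0 = (if l \<le> k then vs (k - l) else 0\<^sub>v m)"
proof (intro eq_vecI)
  fix c assume "c < dim_vec (if l \<le> k then vs (k - l) else 0\<^sub>v m)"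
  then have c: "c < m" using vs[of "k-l"] by (auto split: if_splits)
  have "m \<le> m*l" using l by simp
  then have c2: "c < m*l" using c by linarith
  show "blk m (win m l vs k) 0 $ c = (if l \<le> k then vs (k - l) else 0\<^sub>v m) $ c"
    using c c2 unfolding blk_def win_def by simp
qed (use vs[of "k-l"] in \<open>auto simp: blk_def\<close>)

lemma shin_win:
  assumes l: "0 < l"
  shows "shin m l (win m l vs k) (vs k) = win m l vs (Suc k)"
proof (intro eq_vecI)
  fix i assume "i < dim_vec (win m l vs (Suc k))"
  then have i: "i < m*l" by simp
  have m: "m > 0" using i by (cases m) auto
  show "shin m l (win m l vs k) (vs k) $ i = win m l vs (Suc k) $ i"
  proof (cases "i + m < m*l")
    case True
    have "(i+m) div m = Suc (i div m)" "(i+m) mod m = i mod m" using m by auto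
    then show ?thesis using True i unfolding shin_def win_def by simp
  next
    case False
    have dl: "i div m = l - 1" "i mod m = i + m - m*l" using div_last[OF i False] by auto
    then have "Suc k + i div m - l = k" using l by simp
    moreover have "l \<le> Suc k + i div m" using dl l by simp
    ultimately show ?thesis using False i dl unfolding shin_def win_def by simp
  qed
qed simp

context
  fixes A B C OL :: "real mat" and n m p l :: nat
  assumes A: "A \<in> carrier_mat n n" and B: "B \<in> carrier_mat n m" and C: "C \<in> carrier_mat p n"
    and OL: "OL \<in> carrier_mat n (p*l)" and OLO: "OL * obs_mat A C l = 1\<^sub>m n"
begin

lemmas invs = inv_step[OF A B C OL OLO]
lemmas bAc = bA_carrier[OF A B C OL OLO]
lemmas bHc = bH_carrier[OF A B C OL OLO]

lemma reach_in_H: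
  assumes l: "0 < l" and vs: "\<And>j. vs j \<in> carrier_vec m"
  shows "\<exists>w\<in>carrier_vec (n+m*l). run (bA A B C OL l) (bB p m l) (0\<^sub>v (p*l+m*l)) vs k = bH A B C l *\<^sub>v w"
proof (induction k)
  case 0
  have "bH A B C l *\<^sub>v 0\<^sub>v (n+m*l) = 0\<^sub>v (p*l+m*l)" using bHc by simp
  then show ?case by (intro bexI[of _ "0\<^sub>v (n+m*l)"]) auto
next
  case (Suc k)
  then obtain w where w: "w \<in> carrier_vec (n+m*l)"
    and e: "run (bA A B C OL l) (bB p m l) (0\<^sub>v (p*l+m*l)) vs k = bH A B C l *\<^sub>v w" by blast
  let ?x = "vec_first w n" and ?u = "vec_last w (m*l)"
  have wxu: "w = ?x @\<^sub>v ?u" using w by simp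
  have "run (bA A B C OL l) (bB p m l) (0\<^sub>v (p*l+m*l)) vs (Suc k)
     = bA A B C OL l *\<^sub>v (bH A B C l *\<^sub>v (?x @\<^sub>v ?u)) + bB p m l *\<^sub>v vs k"
    using e wxu by simp
  also have "\<dots> = bH A B C l *\<^sub>v ((A *\<^sub>v ?x + B *\<^sub>v blk m ?u 0) @\<^sub>v shin m l ?u (vs k))"
    by (rule invs[OF l vec_first_carrier vec_last_carrier vs])
  finally show ?case
    by (intro bexI[of _ "(A *\<^sub>v ?x + B *\<^sub>v blk m ?u 0) @\<^sub>v shin m l ?u (vs k)"]) (use A B in auto)
qed

lemma traj:
  assumes l: "0 < l" and vs: "\<And>j. vs j \<in> carrier_vec m"
  shows "run (bA A B C OL l) (bB p m l) (0\<^sub>v (p*l+m*l)) vs k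
       = bH A B C l *\<^sub>v (run A B (0\<^sub>v n) vs (k - l) @\<^sub>v win m l vs k)"
proof (induction k)
  case 0
  have "bH A B C l *\<^sub>v (0\<^sub>v n @\<^sub>v 0\<^sub>v (m*l)) = 0\<^sub>v (p*l+m*l)" using bHc by (simp add: zero_append)
  then show ?case by (simp add: win0)
next
  case (Suc k)
  have X: "run A B (0\<^sub>v n) vs (k - l) \<in> carrier_vec n" by (rule run_carrier[OF A B _ vs]) simp
  have "run (bA A B C OL l) (bB p m l) (0\<^sub>v (p*l+m*l)) vs (Suc k)
     = bA A B C OL l *\<^sub>v (bH A B C l *\<^sub>v (run A B (0\<^sub>v n) vs (k - l) @\<^sub>v win m l vs k)) + bB p m l *\<^sub>v vs k"
    using Suc by simp
  also have "\<dots> = bH A B C l *\<^sub>v ((A *\<^sub>v run A B (0\<^sub>v n) vs (k - l) + B *\<^sub>v blk m (win m l vs k) 0)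
        @\<^sub>v shin m l (win m l vs k) (vs k))"
    by (rule invs[OF l X win_carrier vs])
  also have "A *\<^sub>v run A B (0\<^sub>v n) vs (k - l) + B *\<^sub>v blk m (win m l vs k) 0 = run A B (0\<^sub>v n) vs (Suc k - l)"
  proof (cases "l \<le> k")
    case True
    then have "Suc k - l = Suc (k - l)" by simp
    then show ?thesis using True blk_win0[OF l vs] by simp
  next
    case False
    then have "Suc k - l = 0" "k - l = 0" by auto
    then show ?thesis using False blk_win0[OF l vs] A B by simp
  qed
  also have "shin m l (win m l vs k) (vs k) = win m l vs (Suc k)" by (rule shin_win[OF l])
  finally show ?case .
qed

end

lemma im_mat_eq:
  assumes "M \<in> carrier_mat r c"
  shows "im_mat M = {y \<in> carrier_vec r. \<exists>x\<in>carrier_vec c. M *\<^sub>v x = y}"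
  unfolding im_mat_def using vec_space.col_space_eq[OF assms] assms by auto

lemma im_mat_zero_rows:
  assumes "M \<in> carrier_mat 0 c"
  shows "im_mat M = carrier_vec 0"
proof -
  have "y \<in> im_mat M" if "y \<in> carrier_vec 0" for y
  proof -
    have "M *\<^sub>v 0\<^sub>v c = y" using that assms by (intro eq_vecI) auto
    then show ?thesis unfolding im_mat_eq[OF assms] using that by auto
  qed
  then show ?thesis unfolding im_mat_eq[OF assms] by auto
qed

lemma mat_rank_le_rows: "M \<in> carrier_mat r c \<Longrightarrow> mat_rank M \<le> r"
  unfolding mat_rank_def using vec_space.rank_le_nr by auto

lemma mat_rank_le_cols: "M \<in> carrier_mat r c \<Longrightarrow> mat_rank M \<le> c"
  unfolding mat_rank_def using vec_space.rank_le_nc by auto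

lemma mat_rank_full: "M \<in> carrier_mat r c \<Longrightarrow> mat_rank M = r \<Longrightarrow> im_mat M = carrier_vec r"
  unfolding mat_rank_def im_mat_def using vec_space.full_rank_col_space by auto

theorem lemma1:
  fixes A B C OL :: "real mat" and n m p :: nat
  assumes "A \<in> carrier_mat n n" and "B \<in> carrier_mat n m" and "C \<in> carrier_mat p n"
    and "observable A C" and "reachable A B"
    and "OL \<in> carrier_mat n (p * obs_index A C)"
    and "OL * obs_mat A C (obs_index A C) = 1\<^sub>m n"
  shows "im_mat (bH A B C (obs_index A C)) = reach_subspace (bA A B C OL (obs_index A C)) (bB p m (obs_index A C))"
proof -
  note A = assms(1) and B = assms(2) and C = assms(3)
  define l where "l = obs_index A C"
  have OL: "OL \<in> carrier_mat n (p*l)" using assms(6) unfolding l_def .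
  have OLO: "OL * obs_mat A C l = 1\<^sub>m n" using assms(7) unfolding l_def .
  have dA: "dim_row A = n" using A by simp
  have Oc: "\<And>k. obs_mat A C k \<in> carrier_mat (p*k) n" using obs_dim[OF A B C] .
  have rO': "mat_rank (obs_mat A C l) = dim_row A"
    unfolding l_def obs_index_def
    by (rule LeastI[of _ n]) (use assms(4) dA in \<open>simp add: observable_def\<close>)
  then have rO: "mat_rank (obs_mat A C l) = n" using dA by simp
  have nle: "n \<le> p*l" using mat_rank_le_rows[OF Oc[of l]] rO by simp
  have Rc: "ctrb_mat A B n \<in> carrier_mat n (m*n)" unfolding ctrb_mat_def using A B by simp
  have rR: "mat_rank (ctrb_mat A B n) = n" using assms(5) dA unfolding reachable_def by simp
  let ?q = "p*l + m*l"
  have bAc: "bA A B C OL l \<in> carrier_mat ?q ?q" using bA_carrier[OF A B C OL OLO] .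
  have bHc: "bH A B C l \<in> carrier_mat ?q (n+m*l)" using bH_carrier[OF A B C OL OLO] .
  have bBc: "bB p m l \<in> carrier_mat ?q m" using bB_carrier .
  have Kc: "ctrb_mat (bA A B C OL l) (bB p m l) ?q \<in> carrier_mat ?q (m*?q)"
    unfolding ctrb_mat_def using bAc bBc by simp
  have rs: "reach_subspace (bA A B C OL l) (bB p m l) = im_mat (ctrb_mat (bA A B C OL l) (bB p m l) ?q)"
    unfolding reach_subspace_def using bAc by simp
  show ?thesis unfolding l_def[symmetric] rs
  proof (cases "l = 0")
    case True
    have "bH A B C l \<in> carrier_mat 0 (n+m*l)" using bHc True by simp
    moreover have "ctrb_mat (bA A B C OL l) (bB p m l) ?q \<in> carrier_mat 0 (m*?q)" using Kc True by simp
    ultimately show "im_mat (bH A B C l) = im_mat (ctrb_mat (bA A B C OL l) (bB p m l) ?q)"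
      using im_mat_zero_rows by metis
  next
    case False
    then have l: "0 < l" by simp
    have m: "0 < m"
    proof (rule ccontr)
      assume "\<not> 0 < m"
      then have "m = 0" by simp
      then have "n = 0" using mat_rank_le_cols[OF Rc] rR by simp
      then have "mat_rank (obs_mat A C 0) = dim_row A"
        using mat_rank_le_cols[OF Oc[of 0]] dA by simp
      then have "l \<le> 0" unfolding l_def obs_index_def by (rule Least_le)
      then show False using l by simp
    qed
    have nq: "n + l \<le> ?q" using nle m l by (simp add: add_le_mono)
    show "im_mat (bH A B C l) = im_mat (ctrb_mat (bA A B C OL l) (bB p m l) ?q)"
    proof
      show "im_mat (bH A B C l) \<subseteq> im_mat (ctrb_mat (bA A B C OL l) (bB p m l) ?q)"
      proof
        fix y assume "y \<in> im_mat (bH A B C l)"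
        then obtain w where w: "w \<in> carrier_vec (n+m*l)" and y: "y = bH A B C l *\<^sub>v w"
          unfolding im_mat_eq[OF bHc] by auto
        let ?x = "vec_first w n" and ?u = "vec_last w (m*l)"
        have wxu: "w = ?x @\<^sub>v ?u" using w by simp
        have "?x \<in> im_mat (ctrb_mat A B n)" using mat_rank_full[OF Rc rR] by simp
        then obtain z where z: "z \<in> carrier_vec (m*n)" and xz: "ctrb_mat A B n *\<^sub>v z = ?x"
          unfolding im_mat_eq[OF Rc] by auto
        define d where "d = ?q - (n + l)"
        define vs where "vs k = (if k < d then 0\<^sub>v m else if k < d + n then blk m z (k - d) else blk m ?u (k - d - n))" for k
        have vsc: "\<And>j. vs j \<in> carrier_vec m" unfolding vs_def by auto
        have tr: "run (bA A B C OL l) (bB p m l) (0\<^sub>v ?q) vs ?q = bH A B C l *\<^sub>v (run A B (0\<^sub>v n) vs (?q - l) @\<^sub>v win m l vs ?q)"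
          by (rule traj[OF A B C OL OLO l vsc])
        have "run A B (0\<^sub>v n) vs (?q - l) = run A B (0\<^sub>v n) vs (d + n)" using nq unfolding d_def by (simp add: algebra_simps)
        also have "\<dots> = run A B (0\<^sub>v n) (\<lambda>j. vs (d + j)) n"
          by (rule run_prefix[OF _ A B]) (simp add: vs_def)
        also have "\<dots> = run A B (0\<^sub>v n) (blk m z) n"
          by (rule run_cong) (simp add: vs_def)
        also have "\<dots> = ctrb_mat A B n *\<^sub>v cat m (blk m z) n"
          by (rule ctrb_run[OF A B blk_carrier, symmetric])
        also have "\<dots> = ?x" using cat_blk[OF z] xz by simp
        finally have X: "run A B (0\<^sub>v n) vs (?q - l) = ?x" .
        have W: "win m l vs ?q = ?u"
        proof (rule eq_vecI)
          fix i assume "i < dim_vec ?u"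
          then have i: "i < m*l" by simp
          have e1: "l \<le> ?q + i div m" using nq by simp
          have e2: "?q + i div m - l = d + n + i div m" using nq unfolding d_def by simp
          have "win m l vs ?q $ i = blk m ?u (i div m) $ (i mod m)"
            using i e1 e2 unfolding win_def vs_def by simp
          also have "\<dots> = ?u $ i" using m unfolding blk_def by simp
          finally show "win m l vs ?q $ i = ?u $ i" .
        qed simp
        have "y = run (bA A B C OL l) (bB p m l) (0\<^sub>v ?q) vs ?q" using y wxu tr X W by simp
        also have "\<dots> = ctrb_mat (bA A B C OL l) (bB p m l) ?q *\<^sub>v cat m vs ?q"
          by (rule ctrb_run[OF bAc bBc vsc, symmetric])
        finally have "y = ctrb_mat (bA A B C OL l) (bB p m l) ?q *\<^sub>v cat m vs ?q" .
        moreover have "cat m vs ?q \<in> carrier_vec (m*?q)" unfolding cat_def by simp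
        moreover have "y \<in> carrier_vec ?q" using y bHc w by simp
        ultimately show "y \<in> im_mat (ctrb_mat (bA A B C OL l) (bB p m l) ?q)"
          unfolding im_mat_eq[OF Kc] by auto
      qed
    next
      show "im_mat (ctrb_mat (bA A B C OL l) (bB p m l) ?q) \<subseteq> im_mat (bH A B C l)"
      proof
        fix y assume "y \<in> im_mat (ctrb_mat (bA A B C OL l) (bB p m l) ?q)"
        then obtain z where z: "z \<in> carrier_vec (m*?q)" and y: "y = ctrb_mat (bA A B C OL l) (bB p m l) ?q *\<^sub>v z"
          unfolding im_mat_eq[OF Kc] by auto
        have "y = run (bA A B C OL l) (bB p m l) (0\<^sub>v ?q) (blk m z) ?q"
          using y ctrb_run[where vs="blk m z", OF bAc bBc blk_carrier, of ?q] cat_blk[OF z] by simp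
        then obtain w where w: "w \<in> carrier_vec (n+m*l)" and yw: "y = bH A B C l *\<^sub>v w"
          using reach_in_H[where vs="blk m z", OF A B C OL OLO l blk_carrier, of ?q] by auto
        moreover have "y \<in> carrier_vec ?q" using yw bHc w by simp
        ultimately show "y \<in> im_mat (bH A B C l)" unfolding im_mat_eq[OF bHc] by auto
      qed
    qed
  qed
qed

end
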